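(* Let $r,n,k$ be positive integers with $k\geq 2$, $n\in F_r$, and $\omega(n)\geq k$. Then $Q_{k-1}(n)>\lambda_k(r)\,(P_k(n)-r)$.
   Context: For a positive integer $r$, $S_r$ is the multiplicative arithmetic function with $S_r(p^{\alpha})=0$ if $p\leq r$ and $S_r(p^{\alpha})=p^{\alpha-1}(p-r)$ if $p>r$, for all primes $p$ and positive integers $\alpha$. $B_r=\{n\in\mathbb{N}: S_r(n)>0\}$ (positive integers whose smallest prime factor exceeds $r$, together with $1$). $F_r$ is the set of $n\in B_r$ such that $S_r(n)<S_r(m)$ for all $m\in B_r$ with $m>n$. $\omega(n)$ is the number of distinct prime factors of $n$. $P_k(n)$ is the $k$-th largest prime divisor of $n$, and $Q_k(n)$ is the $k$-th smallest prime that is larger than $r$ and does not divide $n$. $r\#$ is the product of all primes $\leq r$ (with $1\#=1$). The Jacobsthal function $J(m)$ is the smallest positive integer $a$ such that every set of $a$ consecutive integers contains an element coprime to $m$; $J_r=J(r\#)$. $\lambda_k(r)$ is the unique positive real root of $\frac{J_r}{r}x^k+kx-(k-1)$. *)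

theory Defs
  imports Complex_Main "HOL-Computational_Algebra.Primes" "HOL-Library.Infinite_Set"
begin

definition S :: "nat \<Rightarrow> nat \<Rightarrow> int" where
  "S r n = (\<Prod>p\<in>prime_factors n.
      if p \<le> r then 0 else int p ^ (multiplicity p n - 1) * (int p - int r))"

definition B :: "nat \<Rightarrow> nat set" where
  "B r = {n. n > 0 \<and> S r n > 0}"

definition F :: "nat \<Rightarrow> nat set" where
  "F r = {n \<in> B r. \<forall>m \<in> B r. m > n \<longrightarrow> S r n < S r m}"

definition omega :: "nat \<Rightarrow> nat" where
  "omega n = card (prime_factors n)"

definition P :: "nat \<Rightarrow> nat \<Rightarrow> nat" where
  "P k n = rev (sorted_list_of_set (prime_factors n)) ! (k - 1)"

text \<open>k-th smallest prime larger than r not dividing n (k \<ge> 1); enumerate is 0-indexed.\<close>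
definition Q :: "nat \<Rightarrow> nat \<Rightarrow> nat \<Rightarrow> nat" where
  "Q r k n = enumerate {p. prime p \<and> p > r \<and> \<not> p dvd n} (k - 1)"

definition primorial :: "nat \<Rightarrow> nat" where
  "primorial r = \<Prod>{p. prime p \<and> p \<le> r}"

definition jacobsthal :: "nat \<Rightarrow> nat" where
  "jacobsthal m = (LEAST a. a > 0 \<and> (\<forall>x::int. \<exists>i<a. coprime (x + int i) (int m)))"

definition Jr :: "nat \<Rightarrow> nat" where
  "Jr r = jacobsthal (primorial r)"

definition lambda :: "nat \<Rightarrow> nat \<Rightarrow> real" where
  "lambda k r = (THE x. x > 0 \<and>
     real (Jr r) / real r * x ^ k + real k * x - (real k - 1) = 0)"

end

theory Submission
  imports Defs
begin


lemma S_pos_iff: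
  assumes "n > 0"
  shows "S r n > 0 \<longleftrightarrow> (\<forall>p\<in>prime_factors n. p > r)"
proof
  assume h: "S r n > 0"
  show "\<forall>p\<in>prime_factors n. p > r"
  proof (rule ccontr)
    assume "\<not> (\<forall>p\<in>prime_factors n. p > r)"
    then obtain p where p: "p \<in> prime_factors n" "p \<le> r" by auto
    have "S r n = 0" unfolding S_def
      by (rule prod_zero) (use p in auto)
    with h show False by simp
  qed
next
  assume h: "\<forall>p\<in>prime_factors n. p > r"
  show "S r n > 0" unfolding S_def
    by (rule prod_pos) (use h in auto)
qed

lemma B_iff: "n \<in> B r \<longleftrightarrow> n > 0 \<and> (\<forall>p\<in>prime_factors n. p > r)"
  unfolding B_def using S_pos_iff by auto

lemma S_real:
  assumes "n > 0" "\<forall>p\<in>prime_factors n. p > r"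
  shows "real_of_int (S r n) = real n * (\<Prod>p\<in>prime_factors n. (1 - real r / real p))"
proof -
  have "real_of_int (S r n) = (\<Prod>p\<in>prime_factors n. real p ^ multiplicity p n * (1 - real r / real p))"
    unfolding S_def of_int_prod
  proof (rule prod.cong[OF refl])
    fix p assume p: "p \<in> prime_factors n"
    have pr: "p > r" using p assms(2) by blast
    have pp: "p > 0" using pr by simp
    have m: "multiplicity p n \<ge> 1" using p assms
      by (auto simp: prime_factors_multiplicity Suc_le_eq)
    then obtain a where a: "multiplicity p n = Suc a" by (cases "multiplicity p n") auto
    show "real_of_int (if p \<le> r then 0 else int p ^ (multiplicity p n - 1) * (int p - int r)) =
        real p ^ multiplicity p n * (1 - real r / real p)"
      using pr pp by (simp add: a field_simps)
  qed
  also have "\<dots> = (\<Prod>p\<in>prime_factors n. real p ^ multiplicity p n) * (\<Prod>p\<in>prime_factors n. (1 - real r / real p))"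
    by (rule prod.distrib)
  also have "(\<Prod>p\<in>prime_factors n. real p ^ multiplicity p n) = real n"
  proof -
    have e: "real n = real (\<Prod>p\<in>prime_factors n. p ^ multiplicity p n)"
      by (rule arg_cong[OF prime_factorization_nat[OF assms(1)]])
    then show ?thesis by (simp add: of_nat_prod)
  qed
  finally show ?thesis .
qed

lemma key_w:
  fixes w :: real and m :: nat
  assumes "0 \<le> w" "w \<le> 1"
  shows "(1 - w) ^ m * (1 + real m * w) \<le> 1"
proof -
  have "1 + real m * w \<le> (1 + w) ^ m" using Bernoulli_inequality[of w m] assms by simp
  hence "(1 - w) ^ m * (1 + real m * w) \<le> (1 - w) ^ m * (1 + w) ^ m"
    using assms by (intro mult_left_mono) auto
  also have "\<dots> = (1 - w^2) ^ m" by (simp add: power_mult_distrib[symmetric] power2_eq_square algebra_simps)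
  also have "\<dots> \<le> 1" using assms by (intro power_le_one) (auto simp: power2_eq_square mult_le_one)
  finally show ?thesis .
qed

lemma key_v:
  fixes v L c :: real and m :: nat
  assumes "0 \<le> v" "v \<le> 1" "0 < L" "L \<le> 1" "c = real m - (real m + 1) * L" "c \<ge> 0"
  shows "(1 + L * v) ^ (m+1) * (1 - v) ^ m + c * v * (1 - v) ^ m \<le> 1"
proof -
  define w where "w = (1 - L) * v"
  have w0: "0 \<le> w" "w \<le> 1" "w \<le> v" using assms unfolding w_def
    by (auto simp: mult_le_one mult_left_le_one_le)
  have h1: "0 \<le> (1 + L * v) * (1 - v)" using assms by auto
  have h2: "(1 + L * v) * (1 - v) \<le> 1 - w" unfolding w_def using assms
    by (simp add: algebra_simps)
  have "(1 + L * v) ^ (m+1) * (1 - v) ^ m = (1 + L*v) * ((1 + L * v) * (1 - v)) ^ m"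
    by (simp add: power_mult_distrib)
  also have "\<dots> \<le> (1 + L*v) * (1 - w) ^ m"
    using h1 h2 assms by (intro mult_left_mono power_mono) auto
  finally have A: "(1 + L * v) ^ (m+1) * (1 - v) ^ m \<le> (1 + L*v) * (1 - w) ^ m" .
  have C: "c * v * (1 - v) ^ m \<le> c * v * (1 - w) ^ m"
    using w0 assms by (intro mult_left_mono power_mono) auto
  have "(1 + L * v) ^ (m+1) * (1 - v) ^ m + c * v * (1 - v) ^ m \<le> (1 + L*v + c * v) * (1 - w) ^ m"
    using A C by (simp add: algebra_simps)
  also have "1 + L*v + c * v = 1 + real m * w" unfolding w_def assms(5) by (simp add: algebra_simps)
  also have "(1 + real m * w) * (1 - w) ^ m \<le> 1" using key_w[OF w0(1,2), of m] by (simp add: mult.commute)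
  finally show ?thesis .
qed

lemma key_main:
  fixes L s r J :: real and m :: nat
  assumes L0: "L > 0" and s0: "s > 0" and r0: "r > 0" and rL: "r \<le> L * s" and J0: "J \<ge> 0"
    and eq: "J / r * L ^ (m+1) + (real m + 1) * L - real m = 0"
  shows "(1 + r/s) ^ (m+1) * (1 - r/(L*s)) ^ m + J * (L*s - r) ^ m / s ^ (m+1) \<le> 1"
proof -
  define v where "v = r / (L * s)"
  define c where "c = real m - (real m + 1) * L"
  have v0: "0 \<le> v" "v \<le> 1" unfolding v_def using assms by (auto simp: field_simps)
  have cJ: "c = J / r * L ^ (m+1)" unfolding c_def using eq by linarith
  have c0: "c \<ge> 0" unfolding cJ using assms by auto
  have L1: "L \<le> 1"
  proof -
    have "(real m + 1) * L \<le> real m" using c0 unfolding c_def by linarith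
    hence "(real m + 1) * L < (real m + 1) * 1" by (simp only: mult_1_right)
    hence "L < 1" by (subst (asm) mult_less_cancel_left_pos) auto
    thus ?thesis by simp
  qed
  have e1: "r / s = L * v" unfolding v_def using assms by (simp add: field_simps)
  have e2: "1 - r / (L*s) = 1 - v" unfolding v_def by simp
  have e3: "L * s - r = L * s * (1 - v)" unfolding v_def using assms by (simp add: field_simps)
  have cv: "c * v = J * L^m / s" unfolding cJ v_def using assms by (simp add: field_simps)
  have e4: "J * (L*s - r) ^ m / s ^ (m+1) = c * v * (1 - v) ^ m"
  proof -
    have "J * (L*s - r) ^ m / s ^ (m+1) = J * (L^m * s^m * (1 - v)^m) / (s * s^m)"
      unfolding e3 power_mult_distrib by simp
    also have "\<dots> = J * L^m / s * (1 - v)^m" using s0 by (simp add: field_simps)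
    finally show ?thesis unfolding cv .
  qed
  show ?thesis unfolding e1 e2 e4
    using key_v[OF v0 L0 L1 c_def c0] .
qed



lemma lambda_facts:
  assumes "r > 0" "k \<ge> 2"
  shows "lambda k r > 0 \<and> real (Jr r) / real r * lambda k r ^ k + real k * lambda k r - (real k - 1) = 0"
proof -
  define a where "a = real (Jr r) / real r"
  have a0: "a \<ge> 0" unfolding a_def by simp
  define f where "f = (\<lambda>x::real. a * x ^ k + real k * x - (real k - 1))"
  have mono: "f x < f y" if "0 \<le> x" "x < y" for x y
  proof -
    have "x ^ k \<le> y ^ k" using that by (intro power_mono) auto
    hence "a * x ^ k \<le> a * y ^ k" using a0 by (intro mult_left_mono)
    moreover have "real k * x < real k * y" using that assms by simp
    ultimately show ?thesis unfolding f_def by linarith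
  qed
  have "\<exists>x\<ge>0. x \<le> 1 \<and> f x = 0"
  proof (rule IVT)
    show "f 0 \<le> 0" unfolding f_def using assms by (simp add: power_0_left)
    show "0 \<le> f 1" unfolding f_def using a0 by simp
    show "\<forall>x. 0 \<le> x \<and> x \<le> 1 \<longrightarrow> isCont f x" unfolding f_def by (auto intro!: continuous_intros)
  qed simp
  then obtain x where x: "x \<ge> 0" "f x = 0" by auto
  have "x \<noteq> 0" using x assms unfolding f_def by (auto simp: power_0_left)
  with x have x0: "x > 0" by simp
  have ex: "\<exists>!x. x > 0 \<and> f x = 0"
  proof (rule ex1I[of _ x])
    show "x > 0 \<and> f x = 0" using x0 x by simp
    fix y assume y: "y > 0 \<and> f y = 0"
    show "y = x"
    proof (rule ccontr)
      assume "y \<noteq> x"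
      hence "y < x \<or> x < y" by auto
      thus False using mono[of y x] mono[of x y] x y x0 by auto
    qed
  qed
  have "lambda k r = (THE x. x > 0 \<and> f x = 0)" unfolding lambda_def f_def a_def by simp
  hence "lambda k r > 0 \<and> f (lambda k r) = 0" using theI'[OF ex] by simp
  thus ?thesis unfolding f_def a_def .
qed

lemma primorial_pos: "primorial r > 0"
  unfolding primorial_def by (rule prod_pos) (auto simp: prime_gt_0_nat)

lemma finite_primes_le: "finite {p::nat. prime p \<and> p \<le> r}"
  by (rule finite_subset[of _ "{..r}"]) auto

lemma prime_dvd_primorial: "prime p \<Longrightarrow> p \<le> r \<Longrightarrow> p dvd primorial r"
  unfolding primorial_def by (rule dvd_prodI[OF finite_primes_le]) auto

lemma jacob_prop: "\<forall>x::int. \<exists>i<primorial r. coprime (x + int i) (int (primorial r))"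
proof
  fix x :: int
  define m where "m = int (primorial r)"
  have m0: "m > 0" unfolding m_def using primorial_pos by simp
  define i where "i = nat ((1 - x) mod m)"
  have i_eq: "int i = (1 - x) mod m" unfolding i_def using m0 by simp
  have "i < primorial r" using m0 i_eq unfolding m_def
    by (metis Euclidean_Rings.pos_mod_bound of_nat_less_iff)
  moreover have "coprime (x + int i) m"
  proof -
    have "(x + int i) mod m = 1 mod m" unfolding i_eq by (simp add: mod_simps)
    moreover have "coprime (1 mod m) m"
    proof (cases "m = 1")
      case False
      hence "1 mod m = 1" using m0 by (intro mod_pos_pos_trivial) auto
      thus ?thesis by simp
    qed simp
    ultimately have "coprime ((x + int i) mod m) m" by simp
    thus ?thesis using coprime_mod_left_iff m0 by auto
  qed
  ultimately show "\<exists>i<primorial r. coprime (x + int i) (int (primorial r))" unfolding m_def by blast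
qed

lemma Jr_facts: "Jr r > 0 \<and> (\<forall>x::int. \<exists>i<Jr r. coprime (x + int i) (int (primorial r)))"
proof -
  have "\<exists>a. a > 0 \<and> (\<forall>x::int. \<exists>i<a. coprime (x + int i) (int (primorial r)))"
    using jacob_prop primorial_pos by blast
  from LeastI_ex[OF this] show ?thesis unfolding Jr_def jacobsthal_def .
qed

lemma Pset_exists:
  assumes "omega n \<ge> k" "k \<ge> 1"
  shows "P k n \<in> prime_factors n \<and> (\<exists>Ps. Ps \<subseteq> prime_factors n \<and> card Ps = k \<and> (\<forall>p\<in>Ps. P k n \<le> p))"
proof -
  define xs where "xs = rev (sorted_list_of_set (prime_factors n))"
  have len: "length xs = omega n" unfolding xs_def omega_def by simp
  have dist: "distinct xs" unfolding xs_def by simp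
  have sxs: "sorted (rev xs)" unfolding xs_def by simp
  have setxs: "set xs = prime_factors n" unfolding xs_def by simp
  have Pk: "P k n = xs ! (k - 1)" unfolding P_def xs_def ..
  have k1: "k - 1 < length xs" using assms len by simp
  have "P k n \<in> prime_factors n" unfolding Pk setxs[symmetric] using k1 by simp
  moreover have "set (take k xs) \<subseteq> prime_factors n" unfolding setxs[symmetric] by (rule set_take_subset)
  moreover have "card (set (take k xs)) = k"
    using distinct_card[of "take k xs"] dist assms len by simp
  moreover have "\<forall>p\<in>set (take k xs). P k n \<le> p"
  proof
    fix p assume "p \<in> set (take k xs)"
    then obtain i where i: "i < length (take k xs)" "p = take k xs ! i" by (auto simp: in_set_conv_nth)
    hence "i \<le> k - 1" "p = xs ! i" by auto
    thus "P k n \<le> p" unfolding Pk using sorted_rev_nth_mono[OF sxs _ k1] by auto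
  qed
  ultimately show ?thesis by blast
qed

lemma infinite_E: "infinite {p::nat. prime p \<and> p > r \<and> \<not> p dvd n}" if "n > 0"
proof -
  have "\<forall>N. \<exists>p\<ge>N. p \<in> {p::nat. prime p \<and> p > r \<and> \<not> p dvd n}"
  proof
    fix N
    obtain p where p: "prime p" "p > N + r + n" using bigger_prime by blast
    have "\<not> p dvd n" using p that by (auto dest: dvd_imp_le)
    thus "\<exists>p\<ge>N. p \<in> {p::nat. prime p \<and> p > r \<and> \<not> p dvd n}" using p by (intro exI[of _ p]) auto
  qed
  thus ?thesis using infinite_nat_iff_unbounded_le by blast
qed

lemma Qset_exists:
  assumes "n > 0" "k \<ge> 2"
  shows "prime (Q r (k-1) n) \<and> Q r (k-1) n > r \<and>
    (\<exists>Qs. card Qs = k - 1 \<and> (\<forall>q\<in>Qs. prime q \<and> q > r \<and> \<not> q dvd n \<and> q \<le> Q r (k-1) n))"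
proof -
  define E where "E = {p::nat. prime p \<and> p > r \<and> \<not> p dvd n}"
  have inf: "infinite E" unfolding E_def using infinite_E assms by blast
  have kk: "k - 1 - 1 = k - 2" by arith
  have Qe: "Q r (k-1) n = enumerate E (k - 2)" by (simp only: Q_def E_def[symmetric] kk)
  have "Q r (k-1) n \<in> E" unfolding Qe by (rule enumerate_in_set[OF inf])
  moreover have "card (enumerate E ` {..<k-1}) = k - 1"
    using card_image[OF inj_on_subset[OF inj_enumerate[OF inf]]] by simp
  moreover have "\<forall>q\<in>enumerate E ` {..<k-1}. q \<in> E \<and> q \<le> Q r (k-1) n"
  proof
    fix q assume "q \<in> enumerate E ` {..<k-1}"
    then obtain i where i: "i < k - 1" "q = enumerate E i" by auto
    have "q \<in> E" unfolding i(2) by (rule enumerate_in_set[OF inf])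
    moreover have "q \<le> Q r (k-1) n" unfolding Qe i(2) using enumerate_mono_le_iff[OF inf] i(1) by simp
    ultimately show "q \<in> E \<and> q \<le> Q r (k-1) n" by simp
  qed
  ultimately show ?thesis unfolding E_def by blast
qed



lemma prod_superset_le:
  fixes f :: "'a \<Rightarrow> real"
  assumes "finite Y" "X \<subseteq> Y" "\<forall>x\<in>Y. 0 \<le> f x \<and> f x \<le> 1"
  shows "prod f Y \<le> prod f X"
proof -
  have "prod f Y = prod f X * prod f (Y - X)"
    using prod.subset_diff[OF assms(2,1)] by (simp add: mult.commute)
  also have "\<dots> \<le> prod f X * 1"
  proof (rule mult_left_mono)
    show "prod f (Y - X) \<le> 1" using assms by (intro prod_le_1) auto
    show "0 \<le> prod f X" using assms by (intro prod_nonneg) auto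
  qed
  finally show ?thesis by simp
qed

lemma prod_primes_dvd:
  fixes n :: nat
  assumes "n > 0" "Ps \<subseteq> prime_factors n"
  shows "\<Prod>Ps dvd n"
proof -
  have "(\<Prod>p\<in>Ps. p) dvd (\<Prod>p\<in>Ps. p ^ multiplicity p n)"
  proof (rule prod_dvd_prod)
    fix p assume "p \<in> Ps"
    hence "multiplicity p n \<noteq> 0" using assms by (auto simp: prime_factors_multiplicity)
    thus "p dvd p ^ multiplicity p n" by (simp add: dvd_power)
  qed
  also have "\<dots> dvd (\<Prod>p\<in>prime_factors n. p ^ multiplicity p n)"
    by (rule prod_dvd_prod_subset) (use assms in auto)
  also have "\<dots> = n" using prime_factorization_nat[OF assms(1)] by simp
  finally show ?thesis by simp
qed

lemma prime_dvd_prod_primes: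
  fixes p :: nat and Qs :: "nat set"
  assumes "prime p" "finite Qs" "\<forall>q\<in>Qs. prime q" "p dvd \<Prod>Qs"
  shows "p \<in> Qs"
proof -
  obtain q where "q \<in> Qs" "p dvd q" using assms by (auto simp: prime_dvd_prod_iff)
  moreover have "p = q" using calculation assms primes_dvd_imp_eq by blast
  ultimately show ?thesis by simp
qed



theorem lemma3p3:
  fixes r n k :: nat
  assumes "r > 0" and "n > 0" and "k \<ge> 2"
    and "n \<in> F r" and "omega n \<ge> k"
  shows "real (Q r (k - 1) n) > lambda k r * (real (P k n) - real r)"
proof (rule ccontr)
  assume neg: "\<not> real (Q r (k - 1) n) > lambda k r * (real (P k n) - real r)"
  define L where "L = lambda k r"
  define J where "J = Jr r"
  define pk where "pk = P k n"
  define qk where "qk = Q r (k - 1) n"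
  have L0: "L > 0" and Leq: "real J / real r * L ^ k + real k * L - (real k - 1) = 0"
    using lambda_facts[OF assms(1,3)] unfolding L_def J_def by auto
  have nB: "n \<in> B r" and Fmin: "\<forall>m\<in>B r. m > n \<longrightarrow> S r n < S r m"
    using assms(4) unfolding F_def by auto
  have pfn: "\<forall>p\<in>prime_factors n. p > r" using nB B_iff by blast
  obtain Ps where Ps: "Ps \<subseteq> prime_factors n" "card Ps = k" "\<forall>p\<in>Ps. pk \<le> p"
    and pk_in: "pk \<in> prime_factors n"
    using Pset_exists[OF assms(5)] assms(3) unfolding pk_def by auto
  obtain Qs where Qs: "card Qs = k - 1" "\<forall>q\<in>Qs. prime q \<and> q > r \<and> \<not> q dvd n \<and> q \<le> qk"
    and qk_r: "qk > r"
    using Qset_exists[OF assms(2,3), of r] unfolding qk_def by auto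
  have finPs: "finite Ps" by (rule card_ge_0_finite) (use Ps(2) assms(3) in simp)
  have finQs: "finite Qs" by (rule card_ge_0_finite) (use Qs(1) assms(3) in simp)
  have pk_r: "pk > r" using pk_in pfn by blast
  have Ps_r: "\<forall>p\<in>Ps. p > r" using Ps(1) pfn by blast
  have Ps_prime: "\<forall>p\<in>Ps. prime p" using Ps(1) by auto
  define s where "s = real pk - real r"
  have s0: "s > 0" unfolding s_def using pk_r by simp
  have qL: "real qk \<le> L * s" using neg unfolding L_def s_def pk_def qk_def by simp
  have rL: "real r \<le> L * s" using qL qk_r by simp
  define A where "A = (\<Prod>p\<in>Ps. real p - real r)"
  define A' where "A' = (\<Prod>p\<in>Ps. real p)"
  define T where "T = (\<Prod>q\<in>Qs. real q - real r)"
  define T' where "T' = (\<Prod>q\<in>Qs. real q)"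
  have A0: "A > 0" unfolding A_def using Ps_r by (intro prod_pos) auto
  have A'0: "A' > 0" unfolding A'_def using Ps_r by (intro prod_pos) auto
  have T0: "T > 0" unfolding T_def using Qs(2) by (intro prod_pos) auto
  have T'0: "T' > 0" unfolding T'_def using Qs(2) by (intro prod_pos) auto
  have b1: "A' / A \<le> (1 + real r / s) ^ k"
  proof -
    have "A' / A = (\<Prod>p\<in>Ps. real p / (real p - real r))" unfolding A_def A'_def by (simp add: prod_dividef)
    also have "\<dots> \<le> (\<Prod>p\<in>Ps. 1 + real r / s)"
    proof (rule prod_mono)
      fix p assume p: "p \<in> Ps"
      have pr: "real p > real r" using p Ps_r by simp
      have ps: "real p - real r \<ge> s" using p Ps(3) unfolding s_def by simp
      have "real p / (real p - real r) = 1 + real r / (real p - real r)" using pr by (simp add: field_simps)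
      also have "\<dots> \<le> 1 + real r / s" using ps s0 by (simp add: frac_le)
      finally show "0 \<le> real p / (real p - real r) \<and> real p / (real p - real r) \<le> 1 + real r / s"
        using pr by simp
    qed
    also have "\<dots> = (1 + real r / s) ^ k" using Ps(2) by simp
    finally show ?thesis .
  qed
  have b2: "T / T' \<le> (1 - real r / (L * s)) ^ (k - 1)"
  proof -
    have "T / T' = (\<Prod>q\<in>Qs. (real q - real r) / real q)" unfolding T_def T'_def by (simp add: prod_dividef)
    also have "\<dots> \<le> (\<Prod>q\<in>Qs. 1 - real r / (L * s))"
    proof (rule prod_mono)
      fix q assume q: "q \<in> Qs"
      have qr: "real q > real r" using q Qs(2) by simp
      have qs: "real q \<le> L * s" using q Qs(2) qL by force
      have "(real q - real r) / real q = 1 - real r / real q" using qr by (simp add: field_simps)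
      also have "\<dots> \<le> 1 - real r / (L * s)" using qs qr by (simp add: frac_le)
      finally show "0 \<le> (real q - real r) / real q \<and> (real q - real r) / real q \<le> 1 - real r / (L * s)"
        using qr by simp
    qed
    also have "\<dots> = (1 - real r / (L * s)) ^ (k - 1)" using Qs(1) by simp
    finally show ?thesis .
  qed
  have b3: "T \<le> (L * s - real r) ^ (k - 1)"
  proof -
    have "T \<le> (\<Prod>q\<in>Qs. L * s - real r)" unfolding T_def
    proof (rule prod_mono)
      fix q assume q: "q \<in> Qs"
      have qr: "real q > real r" using q Qs(2) by simp
      have qs: "real q \<le> L * s" using q Qs(2) qL by force
      show "0 \<le> real q - real r \<and> real q - real r \<le> L * s - real r" using qr qs by simp
    qed
    thus ?thesis using Qs(1) by simp
  qed
  have b4: "s ^ k \<le> A"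
  proof -
    have "(\<Prod>p\<in>Ps. s) \<le> A" unfolding A_def
    proof (rule prod_mono)
      fix p assume p: "p \<in> Ps"
      show "0 \<le> s \<and> s \<le> real p - real r" using p Ps(3) s0 unfolding s_def by simp
    qed
    thus ?thesis using Ps(2) by simp
  qed
  have keyI: "(1 + real r / s) ^ k * (1 - real r / (L * s)) ^ (k - 1) + real J * (L * s - real r) ^ (k - 1) / s ^ k \<le> 1"
  proof -
    have kk: "k = (k - 1) + 1" using assms(3) by simp
    have eq': "real J / real r * L ^ (k - 1 + 1) + (real (k - 1) + 1) * L - real (k - 1) = 0"
      using Leq assms(3) kk by (simp add: of_nat_diff)
    have "(1 + real r / s) ^ (k - 1 + 1) * (1 - real r / (L * s)) ^ (k - 1) + real J * (L * s - real r) ^ (k - 1) / s ^ (k - 1 + 1) \<le> 1"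
      by (rule key_main[OF L0 s0 _ rL _ eq']) (use assms(1) in auto)
    thus ?thesis using kk by simp
  qed
  have interval: "A' / T' + real J \<le> A / T"
  proof -
    have fac1: "A' / T' = A / T * ((A' / A) * (T / T'))" using A0 T0 A'0 T'0 by (simp add: field_simps)
    have fac2: "real J = A / T * (real J * T / A)" using A0 T0 by (simp add: field_simps)
    have c1: "(A' / A) * (T / T') \<le> (1 + real r / s) ^ k * (1 - real r / (L * s)) ^ (k - 1)"
      by (rule mult_mono[OF b1 b2]) (use A0 T0 A'0 T'0 s0 in auto)
    have c2: "real J * T / A \<le> real J * (L * s - real r) ^ (k - 1) / s ^ k"
    proof -
      have "real J * T / A \<le> real J * T / s ^ k" using b4 s0 T0 A0 by (intro divide_left_mono) auto
      also have "\<dots> \<le> real J * (L * s - real r) ^ (k - 1) / s ^ k"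
        using b3 s0 by (intro divide_right_mono mult_left_mono) auto
      finally show ?thesis .
    qed
    have "A' / T' + real J = A / T * ((A' / A) * (T / T') + real J * T / A)"
      using fac1 fac2 by (simp add: algebra_simps)
    also have "\<dots> \<le> A / T * 1"
      using c1 c2 keyI A0 T0 by (intro mult_left_mono) auto
    finally show ?thesis by simp
  qed
  define X where "X = A' / T'"
  have X0: "X > 0" unfolding X_def using A'0 T'0 by simp
  define x0 where "x0 = \<lfloor>X\<rfloor> + 1"
  obtain i where i: "i < J" "coprime (x0 + int i) (int (primorial r))"
    using Jr_facts[of r] unfolding J_def by blast
  define c where "c = x0 + int i"
  have fl: "real_of_int \<lfloor>X\<rfloor> \<le> X" "X < real_of_int (\<lfloor>X\<rfloor> + 1)" using floor_correct[of X] by auto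
  have c_eq: "real_of_int c = real_of_int \<lfloor>X\<rfloor> + 1 + real i" unfolding c_def x0_def by simp
  have fl2: "X < real_of_int \<lfloor>X\<rfloor> + 1" "real_of_int \<lfloor>X\<rfloor> \<le> X" by linarith+
  have cX: "real_of_int c > X" unfolding c_eq using fl2 of_nat_0_le_iff[of i] by linarith
  have iJ: "real i + 1 \<le> real J" using i(1) by simp
  have cY: "real_of_int c \<le> A / T" unfolding c_eq using fl2 iJ interval unfolding X_def by linarith
  have fl0: "\<lfloor>X\<rfloor> \<ge> 0" using X0 by simp
  have c1: "c \<ge> 1" unfolding c_def x0_def using fl0 by simp
  define cn where "cn = nat c"
  have cn_eq: "int cn = c" unfolding cn_def using c1 by simp
  have cn_real: "real cn = real_of_int c" using cn_eq by (metis of_int_of_nat_eq)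
  have cn0: "cn > 0" using c1 cn_eq by simp
  have cop: "coprime cn (primorial r)" using i(2) unfolding c_def[symmetric] cn_eq[symmetric] coprime_int_iff .
  have cn_pf: "\<forall>p\<in>prime_factors cn. p > r"
  proof
    fix p assume p: "p \<in> prime_factors cn"
    have pp: "prime p" "p dvd cn" using p by auto
    show "p > r"
    proof (rule ccontr)
      assume "\<not> p > r"
      hence "p dvd primorial r" using prime_dvd_primorial pp by simp
      hence "is_unit p" using coprime_common_divisor[OF cop pp(2)] by simp
      thus False using pp(1) by simp
    qed
  qed
  have dv: "\<Prod>Ps dvd n" by (rule prod_primes_dvd[OF assms(2) Ps(1)])
  define n1 where "n1 = n div \<Prod>Ps"
  have n_eq: "n = n1 * \<Prod>Ps" unfolding n1_def using dv by simp
  have n1_0: "n1 > 0" using n_eq assms(2) by (metis gr0I mult_is_0)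
  have n1_dvd: "n1 dvd n" using n_eq by simp
  have Ps_real: "real (\<Prod>Ps) = A'" unfolding A'_def by simp
  have Qs_real: "real (\<Prod>Qs) = T'" unfolding T'_def by simp
  have n1_real: "real n1 = real n / A'" using n_eq Ps_real A'0
    by (metis nonzero_eq_divide_eq of_nat_mult less_irrefl)
  define m where "m = n1 * \<Prod>Qs * cn"
  have Qs_pos: "\<Prod>Qs > 0" using Qs(2) by (intro prod_pos) auto
  have m0: "m > 0" unfolding m_def using n1_0 Qs_pos cn0 by simp
  have m_real: "real m = real n / A' * T' * real_of_int c"
    unfolding m_def using n1_real Qs_real cn_real by simp
  have mn: "m > n"
  proof -
    have "T' * real_of_int c > A'" using cX T'0 unfolding X_def by (simp add: field_simps)
    hence "real n / A' * (T' * real_of_int c) > real n / A' * A'" using assms(2) A'0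
      by (intro mult_strict_left_mono) auto
    hence "real m > real n" unfolding m_real using A'0 by (simp add: mult.assoc)
    thus ?thesis by simp
  qed
  have pfm: "\<forall>p\<in>prime_factors m. p > r"
  proof
    fix p assume p: "p \<in> prime_factors m"
    have pp: "prime p" "p dvd m" using p by auto
    hence "p dvd n1 \<or> p dvd \<Prod>Qs \<or> p dvd cn" unfolding m_def by (auto simp: prime_dvd_mult_iff)
    moreover
    { assume "p dvd n1"
      hence "p \<in> prime_factors n" using dvd_trans[OF _ n1_dvd] pp(1) assms(2) by (auto simp: in_prime_factors_iff)
      hence "p > r" using pfn by blast }
    moreover
    { assume "p dvd \<Prod>Qs"
      hence "p \<in> Qs" using prime_dvd_prod_primes[OF pp(1) finQs] Qs(2) by blast
      hence "p > r" using Qs(2) by blast }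
    moreover
    { assume "p dvd cn"
      hence "p \<in> prime_factors cn" using pp(1) cn0 by (auto simp: in_prime_factors_iff)
      hence "p > r" using cn_pf by blast }
    ultimately show "p > r" by blast
  qed
  have mB: "m \<in> B r" using B_iff m0 pfm by blast
  have Slt: "S r n < S r m" using Fmin mB mn by blast
  define f where "f = (\<lambda>p::nat. 1 - real r / real p)"
  define Rn where "Rn = (\<Prod>p\<in>prime_factors n. f p)"
  define Rm where "Rm = (\<Prod>p\<in>prime_factors m. f p)"
  have Sn_eq: "real_of_int (S r n) = real n * Rn" unfolding Rn_def f_def using S_real[OF assms(2) pfn] .
  have Sm_eq: "real_of_int (S r m) = real m * Rm" unfolding Rm_def f_def using S_real[OF m0 pfm] .
  define D where "D = (prime_factors n - Ps) \<union> Qs"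
  have D_sub: "D \<subseteq> prime_factors m"
  proof
    fix p assume "p \<in> D"
    then consider "p \<in> prime_factors n" "p \<notin> Ps" | "p \<in> Qs" unfolding D_def by blast
    thus "p \<in> prime_factors m"
    proof cases
      case 1
      have pp: "prime p" "p dvd n" using 1 by auto
      have "\<not> p dvd \<Prod>Ps"
      proof
        assume "p dvd \<Prod>Ps"
        hence "p \<in> Ps" using prime_dvd_prod_primes[OF pp(1) finPs] Ps_prime by blast
        thus False using 1 by simp
      qed
      hence "p dvd n1" using pp n_eq by (metis prime_dvd_mult_iff)
      hence "p dvd m" unfolding m_def by simp
      thus ?thesis using pp(1) m0 by (auto simp: in_prime_factors_iff)
    next
      case 2
      have "p dvd \<Prod>Qs" using 2 finQs by (intro dvd_prodI) auto
      hence "p dvd m" unfolding m_def by (metis dvd_mult dvd_mult2)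
      thus ?thesis using 2 Qs(2) m0 by (auto simp: in_prime_factors_iff)
    qed
  qed
  have f01: "\<forall>p\<in>prime_factors m. 0 \<le> f p \<and> f p \<le> 1"
    using pfm unfolding f_def by auto
  have Rm_le: "Rm \<le> prod f D" unfolding Rm_def by (rule prod_superset_le[OF _ D_sub f01]) simp
  have disj: "(prime_factors n - Ps) \<inter> Qs = {}" using Qs(2) by auto
  have prodD: "prod f D = prod f (prime_factors n - Ps) * prod f Qs"
    unfolding D_def by (rule prod.union_disjoint) (use finQs disj in auto)
  have Rn_split: "Rn = prod f (prime_factors n - Ps) * prod f Ps"
    unfolding Rn_def using prod.subset_diff[OF Ps(1)] by simp
  have fPs: "prod f Ps = A / A'"
  proof -
    have "prod f Ps = (\<Prod>p\<in>Ps. (real p - real r) / real p)" unfolding f_def using Ps_r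
      by (intro prod.cong) (auto simp: field_simps)
    thus ?thesis unfolding A_def A'_def by (simp add: prod_dividef)
  qed
  have fQs: "prod f Qs = T / T'"
  proof -
    have "prod f Qs = (\<Prod>p\<in>Qs. (real p - real r) / real p)" unfolding f_def using Qs(2)
      by (intro prod.cong) (auto simp: field_simps)
    thus ?thesis unfolding T_def T'_def by (simp add: prod_dividef)
  qed
  have Rm_bound: "Rm \<le> Rn * (A' / A) * (T / T')"
  proof -
    have "prod f (prime_factors n - Ps) = Rn * (A' / A)" using Rn_split fPs A0 A'0 by (simp add: field_simps)
    thus ?thesis using Rm_le prodD fQs by simp
  qed
  have Rn0: "Rn \<ge> 0" unfolding Rn_def f_def using pfn by (intro prod_nonneg) auto
  have "real_of_int (S r m) \<le> (real n / A' * T' * real_of_int c) * (Rn * (A' / A) * (T / T'))"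
    unfolding Sm_eq m_real[symmetric] using Rm_bound by (intro mult_left_mono) auto
  also have "\<dots> = real n * Rn * (real_of_int c * T / A)" using A0 A'0 T0 T'0 by (simp add: field_simps)
  also have "\<dots> \<le> real n * Rn * 1"
  proof (rule mult_left_mono)
    show "real_of_int c * T / A \<le> 1" using cY A0 T0 by (simp add: field_simps)
    show "0 \<le> real n * Rn" using Rn0 by simp
  qed
  finally have "real_of_int (S r m) \<le> real_of_int (S r n)" using Sn_eq by simp
  with Slt show False by simp
qed

end
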